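(* Let $b>1$, let $(p,R,I)$ be proper with $I$ non-empty, and let $k$ be the greatest divisor of $p$ coprime with $b$. Then the $0$-circuits of the minimisation of $\mathcal{C}_{R,p,I}$ have a total of $k+1$ states.
   Context: $A_b=\{0,\ldots,b-1\}$. Given $p\ge1$, $R\subseteq\{0,\ldots,p-1\}$, finite $I\subseteq\mathbb{N}$, let $S=(R+p\mathbb{N})\oplus I$ ($\oplus$ = symmetric difference). $(p,R,I)$ is proper if $p$ is the smallest positive integer for which $S=(R'+p\mathbb{N})\oplus I'$ for some $R'\subseteq\{0,\ldots,p-1\}$ and finite $I'$. $\mathcal{A}_{R,p}$: states $\{0,\ldots,p-1\}$, initial $0$, final $R$, transitions $n\xrightarrow{a}(nb+a)\bmod p$. With $m=\max I$, $\mathcal{B}_I$: states $\{0,\ldots,m\}\cup\{\bot\}$, initial $0$, final $I$, transitions $i\xrightarrow{a}ib+a$ if $ib+a\le m$, else $i\xrightarrow{a}\bot$, and $\bot\xrightarrow{a}\bot$. $\mathcal{C}_{R,p,I}$ is the accessible part of the product of $\mathcal{A}_{R,p}$ and $\mathcal{B}_I$ (initial state $(0,0)$, componentwise transitions), with $(s,t)$ final iff exactly one of $s\in R$, $t\in I$ holds. The minimisation is the complete deterministic automaton with fewest states accepting the same language. A $0$-circuit is a circuit all of whose transitions are labelled $0$. *)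

theory Defs
  imports Main
begin

record 'q dfa =
  states :: "'q set"
  init   :: 'q
  final  :: "'q set"
  trans  :: "'q \<Rightarrow> nat \<Rightarrow> 'q"

definition run :: "'q dfa \<Rightarrow> 'q \<Rightarrow> nat list \<Rightarrow> 'q" where
  "run M q w = foldl (trans M) q w"

definition words :: "nat \<Rightarrow> nat list set" where
  "words b = {w. set w \<subseteq> {..<b}}"

definition lang :: "nat \<Rightarrow> 'q dfa \<Rightarrow> nat list set" where
  "lang b M = {w \<in> words b. run M (init M) w \<in> final M}"

definition complete_dfa :: "nat \<Rightarrow> 'q dfa \<Rightarrow> bool" where
  "complete_dfa b M \<longleftrightarrow> finite (states M) \<and> init M \<in> states M \<and> final M \<subseteq> states M
     \<and> (\<forall>q \<in> states M. \<forall>a < b. trans M q a \<in> states M)"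

definition symdiff :: "'a set \<Rightarrow> 'a set \<Rightarrow> 'a set" where
  "symdiff A B = (A - B) \<union> (B - A)"

definition Sset :: "nat \<Rightarrow> nat set \<Rightarrow> nat set \<Rightarrow> nat set" where
  "Sset p R I = symdiff {r + p * j | r j. r \<in> R} I"

definition proper :: "nat \<Rightarrow> nat set \<Rightarrow> nat set \<Rightarrow> bool" where
  "proper p R I \<longleftrightarrow> p \<ge> 1 \<and> R \<subseteq> {..<p} \<and> finite I \<and>
     (\<forall>p'. 0 < p' \<and> p' < p \<longrightarrow>
        \<not> (\<exists>R' I'. R' \<subseteq> {..<p'} \<and> finite I' \<and> Sset p R I = Sset p' R' I'))"

definition autA :: "nat \<Rightarrow> nat \<Rightarrow> nat set \<Rightarrow> nat dfa" where
  "autA b p R = \<lparr> states = {..<p}, init = 0, final = R,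
                  trans = (\<lambda>n a. (n * b + a) mod p) \<rparr>"

text \<open>The automaton B_I; the sink state \<bottom> is represented by None, state i by Some i.\<close>
definition autB :: "nat \<Rightarrow> nat set \<Rightarrow> nat option dfa" where
  "autB b I = (let m = Max I in
     \<lparr> states = Some ` {0..m} \<union> {None}, init = Some 0, final = Some ` I,
       trans = (\<lambda>t a. case t of None \<Rightarrow> None
                     | Some i \<Rightarrow> (if i * b + a \<le> m then Some (i * b + a) else None)) \<rparr>)"

definition autC :: "nat \<Rightarrow> nat \<Rightarrow> nat set \<Rightarrow> nat set \<Rightarrow> (nat \<times> nat option) dfa" where
  "autC b p R I =
     (let A = autA b p R; B = autB b I;
          d = (\<lambda>(s, t) a. (trans A s a, trans B t a));
          P = \<lparr> states = states A \<times> states B, init = (init A, init B),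
                final = {(s, t). (s \<in> final A) \<noteq> (t \<in> final B)}, trans = d \<rparr>;
          Acc = {run P (init P) w | w. w \<in> words b}
      in \<lparr> states = Acc, init = init P, final = final P \<inter> Acc, trans = d \<rparr>)"

text \<open>A minimisation of a language: a complete DFA accepting it with the fewest states.
  State sets are taken inside nat (any finite automaton can be renamed into nat).\<close>
definition is_minimisation :: "nat \<Rightarrow> nat dfa \<Rightarrow> nat list set \<Rightarrow> bool" where
  "is_minimisation b M L \<longleftrightarrow> complete_dfa b M \<and> lang b M = L \<and>
     (\<forall>M' :: nat dfa. complete_dfa b M' \<and> lang b M' = L \<longrightarrow> card (states M) \<le> card (states M'))"

definition on_zero_circuit :: "'q dfa \<Rightarrow> 'q \<Rightarrow> bool" where
  "on_zero_circuit M q \<longleftrightarrow> q \<in> states M \<and> (\<exists>n \<ge> 1. ((\<lambda>s. trans M s 0) ^^ n) q = q)"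

end

theory Submission
  imports Defs "HOL-Number_Theory.Number_Theory"
begin


definition vfrom :: "nat \<Rightarrow> nat \<Rightarrow> nat list \<Rightarrow> nat" where
  "vfrom b x w = foldl (\<lambda>x a. x * b + a) x w"

definition val :: "nat \<Rightarrow> nat list \<Rightarrow> nat" where
  "val b w = vfrom b 0 w"

lemma vfrom_eq: "vfrom b x w = x * b ^ length w + val b w"
proof (induction w arbitrary: x rule: rev_induct)
  case Nil thus ?case by (simp add: vfrom_def val_def)
next
  case (snoc a w)
  have "vfrom b x (w @ [a]) = vfrom b x w * b + a" by (simp add: vfrom_def)
  also have "\<dots> = (x * b ^ length w + val b w) * b + a" using snoc by simp
  also have "val b (w @ [a]) = val b w * b + a" by (simp add: val_def vfrom_def)
  ultimately show ?case by (simp add: algebra_simps)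
qed

lemma val_append: "val b (u @ v) = val b u * b ^ length v + val b v"
  by (metis foldl_append val_def vfrom_def vfrom_eq)

lemma val_snoc: "val b (w @ [a]) = val b w * b + a"
  by (simp add: val_def vfrom_def)

lemma val_rep: "val b (replicate n 0) = 0"
  by (induction n) (auto simp: val_def vfrom_def)

lemma val_rep0: "val b (replicate n 0 @ v) = val b v"
  by (simp add: val_append val_rep)

lemma words_append[simp]: "u @ v \<in> words b \<longleftrightarrow> u \<in> words b \<and> v \<in> words b"
  by (auto simp: words_def)

lemma rep0_words: "b > 0 \<Longrightarrow> replicate n 0 \<in> words b"
  by (auto simp: words_def)

lemma exists_word:
  assumes "b > 0" "z < b ^ n"
  shows "\<exists>v \<in> words b. length v = n \<and> val b v = z"
  using assms(2)
proof (induction n arbitrary: z)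
  case 0 thus ?case by (auto simp: words_def val_def vfrom_def)
next
  case (Suc n)
  have "z div b < b ^ n" using Suc.prems assms(1)
    by (simp add: less_mult_imp_div_less mult.commute)
  then obtain v where v: "v \<in> words b" "length v = n" "val b v = z div b" using Suc.IH by blast
  have "v @ [z mod b] \<in> words b" using v(1) assms(1) by (simp add: words_def)
  moreover have "val b (v @ [z mod b]) = z" using v(3) by (simp add: val_snoc)
  ultimately show ?case using v(2) by (intro bexI[of _ "v @ [z mod b]"]) auto
qed

lemma pow_gt: "b > 1 \<Longrightarrow> n < (b::nat) ^ n"
proof (induction n)
  case 0 thus ?case by simp
next
  case (Suc n) 
  have "2 * b ^ n \<le> b * b ^ n" using Suc.prems by (intro mult_right_mono) auto
  moreover have "0 < b ^ n" using Suc.prems by (simp del: One_nat_def)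
  ultimately show ?case using Suc.IH[OF Suc.prems] unfolding power_Suc by linarith
qed

lemma exists_word_val: "b > 1 \<Longrightarrow> \<exists>v \<in> words b. val b v = z"
  using exists_word[of b z z] pow_gt[of b z] by auto



lemma k_props:
  assumes "p \<ge> 1" "k = (GREATEST d. d dvd p \<and> coprime d (b::nat))"
  shows "k dvd p" "coprime k b" "k > 0" "\<And>d. d dvd p \<Longrightarrow> coprime d b \<Longrightarrow> d \<le> k"
proof -
  have bnd: "\<And>y. y dvd p \<and> coprime y b \<Longrightarrow> y \<le> p" using assms(1) by (auto intro: dvd_imp_le)
  have one: "1 dvd p \<and> coprime 1 b" by simp
  show "k dvd p" "coprime k b" using GreatestI_nat[of "\<lambda>d. d dvd p \<and> coprime d b", OF one bnd] assms(2) by auto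
  then show "k > 0" using assms(1) by (cases "k = 0") auto
  show "\<And>d. d dvd p \<Longrightarrow> coprime d b \<Longrightarrow> d \<le> k"
    using Greatest_le_nat[of "\<lambda>d. d dvd p \<and> coprime d b", OF _ bnd] assms(2) by auto
qed

lemma q_primes:
  assumes "p \<ge> 1" "k = (GREATEST d. d dvd p \<and> coprime d (b::nat))" "prime r" "r dvd p div k"
  shows "r dvd b"
proof (rule ccontr)
  assume "\<not> r dvd b"
  hence "coprime r b" using assms(3) by (simp add: prime_imp_coprime)
  hence "coprime (k * r) b" using k_props(2)[OF assms(1,2)] by simp
  moreover have "k * r dvd k * (p div k)" using assms(4) by (rule mult_dvd_mono[OF dvd_refl])
  moreover have "k * (p div k) = p" using k_props(1)[OF assms(1,2)] by simp
  ultimately have "k * r dvd p" by simp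
  moreover note \<open>coprime (k * r) b\<close>
  ultimately have "k * r \<le> k" using k_props(4)[OF assms(1,2)] by blast
  moreover have "r \<ge> 2" using assms(3) prime_ge_2_nat by blast
  moreover have "k * 2 \<le> k * r" using \<open>r \<ge> 2\<close> by simp
  ultimately show False using k_props(3)[OF assms(1,2)] by linarith
qed

lemma dvd_pow_self:
  fixes q b :: nat
  assumes "q > 0" "\<And>r. prime r \<Longrightarrow> r dvd q \<Longrightarrow> r dvd b"
  shows "q dvd b ^ q"
  using assms
proof (induction q rule: less_induct)
  case (less q)
  show ?case
  proof (cases "q = 1")
    case True thus ?thesis by simp
  next
    case False
    then obtain r where r: "prime r" "r dvd q" using prime_factor_nat by blast
    then obtain q' where q': "q = r * q'" by blast
    have r2: "r \<ge> 2" using r(1) prime_ge_2_nat by blast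
    have "q' > 0" using less.prems(1) q' by simp
    have "q' < q" using q' r2 \<open>q' > 0\<close> by simp
    have "\<And>ra. prime ra \<Longrightarrow> ra dvd q' \<Longrightarrow> ra dvd b" using less.prems(2) q' by (metis dvd_mult)
    hence "q' dvd b ^ q'"
      using less.IH[OF \<open>q' < q\<close> \<open>q' > 0\<close>] by blast
    moreover have "r dvd b" using less.prems(2) r by blast
    ultimately have "q dvd b * b ^ q'" using q' by (simp add: mult_dvd_mono)
    hence "q dvd b ^ Suc q'" by simp
    moreover have "Suc q' \<le> q" using \<open>q' < q\<close> by simp
    ultimately show ?thesis by (meson dvd_trans le_imp_power_dvd)
  qed
qed

lemma q_dvd_pow:
  assumes "p \<ge> 1" "k = (GREATEST d. d dvd p \<and> coprime d (b::nat))" "N \<ge> p div k"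
  shows "p div k dvd b ^ N"
proof -
  have "k * (p div k) = p" using k_props(1)[OF assms(1,2)] by simp
  hence "p div k > 0" using assms(1) by (cases "p div k = 0") auto
  hence "p div k dvd b ^ (p div k)" using dvd_pow_self q_primes[OF assms(1,2)] by blast
  thus ?thesis using assms(3) by (meson dvd_trans le_imp_power_dvd)
qed

lemma periodic:
  assumes "p \<ge> 1" "k = (GREATEST d. d dvd p \<and> coprime d (b::nat))" "s < p" "p div k dvd s"
  shows "s * b ^ (totient k * c) mod p = s"
proof -
  define q where "q = p div k"
  have pk: "p = q * k" using k_props(1)[OF assms(1,2)] q_def by simp
  obtain t where t: "s = q * t" using assms(4) unfolding q_def by (rule dvdE)
  have "q > 0" using pk assms(1) by (cases "q = 0") auto
  have "q * t < q * k" using assms(3) pk t by simp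
  hence tk: "t < k" by simp
  have "[b ^ totient k = 1] (mod k)" 
    using k_props(2)[OF assms(1,2)] by (intro euler_theorem) (simp add: ac_simps)
  hence "[(b ^ totient k) ^ c = 1 ^ c] (mod k)" by (rule cong_pow)
  hence "[t * (b ^ totient k) ^ c = t * 1 ^ c] (mod k)" by (rule cong_scalar_left)
  hence "[t * b ^ (totient k * c) = t * 1] (mod k)" by (simp add: power_mult)
  hence "t * b ^ (totient k * c) mod k = t" using tk by (simp add: cong_def)
  hence "q * (t * b ^ (totient k * c) mod k) = s" using t by simp
  moreover have "s * b ^ (totient k * c) mod p = (q * (t * b ^ (totient k * c))) mod (q * k)"
    by (simp only: t pk mult.assoc)
  moreover have "q * (t * b ^ (totient k * c) mod k) = (q * (t * b ^ (totient k * c))) mod (q * k)"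
    by (rule mult_mod_right)
  ultimately show ?thesis by linarith
qed

lemma card_P:
  assumes "p \<ge> 1" "k = (GREATEST d. d dvd p \<and> coprime d (b::nat))"
  shows "card {s. s < p \<and> p div k dvd s} = k" "finite {s. s < p \<and> p div k dvd s}"
proof -
  define q where "q = p div k"
  have pk: "p = q * k" using k_props[OF assms(1,2)] q_def by simp
  have "q > 0" using pk assms(1) by (cases "q = 0") auto
  have "{s. s < p \<and> q dvd s} = (\<lambda>t. q * t) ` {..<k}"
  proof (rule equalityI; rule subsetI)
    fix s assume "s \<in> {s. s < p \<and> q dvd s}"
    then obtain t where t: "s = q * t" "s < p" by auto
    hence "t < k" using pk \<open>q > 0\<close> by simp
    thus "s \<in> (\<lambda>t. q * t) ` {..<k}" using t(1) by blast
  next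
    fix s assume "s \<in> (\<lambda>t. q * t) ` {..<k}"
    then obtain t where t: "s = q * t" "t < k" by blast
    hence "s < p" using pk \<open>q > 0\<close> by simp
    thus "s \<in> {s. s < p \<and> q dvd s}" using t by simp
  qed
  moreover have "inj_on (\<lambda>t. q * t) {..<k}" using \<open>q > 0\<close> by (auto simp: inj_on_def)
  ultimately show "card {s. s < p \<and> p div k dvd s} = k" "finite {s. s < p \<and> p div k dvd s}"
    using q_def by (simp_all add: card_image)
qed



lemma setform:
  assumes "R \<subseteq> {..<p}"
  shows "{r + p * j | r j. r \<in> R} = {x. x mod (p::nat) \<in> R}"
proof (rule equalityI; rule subsetI)
  fix x assume "x \<in> {r + p * j | r j. r \<in> R}"
  then obtain r j where "x = r + p * j" "r \<in> R" by blast
  moreover have "r < p" using assms \<open>r \<in> R\<close> by auto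
  ultimately show "x \<in> {x. x mod p \<in> R}" by simp
next
  fix x assume "x \<in> {x. x mod p \<in> R}"
  hence "x mod p \<in> R" by simp
  moreover have "x = x mod p + p * (x div p)" by simp
  ultimately show "x \<in> {r + p * j | r j. r \<in> R}" by blast
qed

lemma S_iff:
  assumes "R \<subseteq> {..<p}"
  shows "x \<in> Sset p R I \<longleftrightarrow> (x mod p \<in> R) \<noteq> (x \<in> I)"
  unfolding Sset_def symdiff_def setform[OF assms] by auto

definition Res :: "nat \<Rightarrow> nat set \<Rightarrow> nat \<Rightarrow> nat list set" where
  "Res b S x = {v \<in> words b. x * b ^ length v + val b v \<in> S}"

definition Tr :: "nat \<Rightarrow> nat \<Rightarrow> nat set \<Rightarrow> nat \<Rightarrow> nat list set" where
  "Tr b p R s = {v \<in> words b. (s * b ^ length v + val b v) mod p \<in> R}"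

lemma notin_I: "finite I \<Longrightarrow> x > Max I \<Longrightarrow> x \<notin> I"
  using Max_ge[of I x] by (auto simp: not_less[symmetric])

lemma Res_big:
  assumes "R \<subseteq> {..<p}" "finite I" "y > Max I" "b \<ge> 1"
  shows "Res b (Sset p R I) y = Tr b p R (y mod p)"
proof -
  have "\<And>v::nat list. y * b ^ length v + val b v \<in> Sset p R I \<longleftrightarrow> (y mod p * b ^ length v + val b v) mod p \<in> R"
  proof -
    fix v :: "nat list"
    have "b ^ length v \<ge> 1" using assms(4) by simp
    hence "y * b ^ length v \<ge> y" by simp
    hence "y * b ^ length v + val b v > Max I" using assms(3) by linarith
    hence "y * b ^ length v + val b v \<notin> I" by (rule notin_I[OF assms(2)])
    moreover have "(y mod p * b ^ length v + val b v) mod p = (y * b ^ length v + val b v) mod p"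
    proof -
      have "(y mod p * b ^ length v + val b v) mod p = ((y mod p * b ^ length v) mod p + val b v) mod p"
        by (rule mod_add_left_eq[symmetric])
      also have "(y mod p * b ^ length v) mod p = (y * b ^ length v) mod p" by (rule mod_mult_left_eq)
      also have "((y * b ^ length v) mod p + val b v) mod p = (y * b ^ length v + val b v) mod p"
        by (rule mod_add_left_eq)
      finally show ?thesis .
    qed
    ultimately show "?thesis v" using S_iff[OF assms(1)] by simp
  qed
  thus ?thesis unfolding Res_def Tr_def by simp
qed

lemma Res_shift:
  assumes "b > 0"
  shows "v \<in> Res b S (y * b ^ n) \<longleftrightarrow> replicate n 0 @ v \<in> Res b S y"
proof -
  have "y * b ^ n * b ^ length v = y * b ^ length (replicate n 0 @ v)"
    by (simp add: power_add mult.assoc)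
  moreover have "replicate n 0 @ v \<in> words b \<longleftrightarrow> v \<in> words b"
    using rep0_words[OF assms] by simp
  ultimately show ?thesis unfolding Res_def by (simp only: mem_Collect_eq val_rep0)
qed

lemma Res_shift_eq:
  assumes "b > 0" "Res b S y = Res b S y'"
  shows "Res b S (y * b ^ n) = Res b S (y' * b ^ n)"
  using Res_shift[OF assms(1)] assms(2) by blast

lemma shift_not_proper:
  assumes "proper p R I" "0 < d" "d < p" "\<forall>t<p. (t \<in> R) = ((t + d) mod p \<in> R)"
  shows False
proof -
  have P3: "p \<ge> 1 \<and> R \<subseteq> {..<p} \<and> finite I \<and>
     (\<forall>p'. 0 < p' \<and> p' < p \<longrightarrow>
        \<not> (\<exists>R' I'. R' \<subseteq> {..<p'} \<and> finite I' \<and> Sset p R I = Sset p' R' I'))"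
    using assms(1) unfolding proper_def .
  have R: "R \<subseteq> {..<p}" and fin: "finite I" using P3 by simp_all
  define A where "A = {x. x mod p \<in> R}"
  have inv1: "x \<in> A \<longleftrightarrow> x + d \<in> A" for x
  proof -
    have "(x + d) mod p = (x mod p + d) mod p" by (simp add: mod_add_left_eq)
    moreover have "x mod p < p" using assms(2,3) by simp
    moreover note assms(4)[rule_format, of "x mod p"]
    ultimately show ?thesis unfolding A_def by (simp only: mem_Collect_eq)
  qed
  have invd: "x \<in> A \<longleftrightarrow> x + d * i \<in> A" for x i
  proof (induction i)
    case 0 thus ?case by simp
  next
    case (Suc i) thus ?case using inv1[of "x + d * i"] by (simp add: ac_simps)
  qed
  have invp: "x + p * i \<in> A \<longleftrightarrow> x \<in> A" for x i unfolding A_def by simp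
  define g where "g = gcd d p"
  obtain c e where ce: "d * c = p * e + g" using bezout_nat[of d p] assms(2) g_def by auto
  have invg: "x \<in> A \<longleftrightarrow> x + g \<in> A" for x
  proof -
    have "x + g \<in> A \<longleftrightarrow> x + g + p * e \<in> A" using invp[of "x + g" e] by simp
    also have "x + g + p * e = x + d * c" using ce by simp
    finally show ?thesis using invd[of x c] by simp
  qed
  have invgi: "x \<in> A \<longleftrightarrow> x + g * i \<in> A" for x i
  proof (induction i)
    case 0 thus ?case by simp
  next
    case (Suc i) thus ?case using invg[of "x + g * i"] by (simp add: ac_simps)
  qed
  have g0: "g > 0" using assms(2) g_def by simp
  have "g \<le> d" using gcd_le1_nat[of d p] assms(2) g_def by simp
  hence gp: "g < p" using assms(3) by simp
  have invmod: "x \<in> A \<longleftrightarrow> x mod g \<in> A" for x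
    using invgi[of "x mod g" "x div g"] by simp
  define R2 where "R2 = {r. r < g \<and> r \<in> A}"
  have R2: "R2 \<subseteq> {..<g}" unfolding R2_def by auto
  have "{r + g * j | r j. r \<in> R2} = A"
  proof -
    have "x mod g \<in> R2 \<longleftrightarrow> x \<in> A" for x
      using invmod[of x] g0 unfolding R2_def by simp
    thus ?thesis unfolding setform[OF R2] by blast
  qed
  moreover have "{r + p * j | r j. r \<in> R} = A" unfolding setform[OF R] A_def by simp
  ultimately have "Sset p R I = Sset g R2 I" unfolding Sset_def by simp
  hence "\<exists>R' I'. R' \<subseteq> {..<g} \<and> finite I' \<and> Sset p R I = Sset g R' I'"
    using R2 fin by blast
  moreover have "\<not> (\<exists>R' I'. R' \<subseteq> {..<g} \<and> finite I' \<and> Sset p R I = Sset g R' I')"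
    using P3 g0 gp by simp
  ultimately show False by contradiction
qed



lemma Tr_per:
  assumes "p \<ge> 1" "k = (GREATEST d. d dvd p \<and> coprime d (b::nat))"
    and "s < p" "p div k dvd s" "length v = totient k * c"
  shows "v \<in> Tr b p R s \<longleftrightarrow> v \<in> words b \<and> (s + val b v) mod p \<in> R"
proof -
  have per: "s * b ^ (totient k * c) mod p = s" using periodic[OF assms(1,2,3,4)] .
  have "(s * b ^ (totient k * c) + val b v) mod p = ((s * b ^ (totient k * c)) mod p + val b v) mod p"
    by (rule mod_add_left_eq[symmetric])
  also have "\<dots> = (s + val b v) mod p" using per by simp
  finally show ?thesis using assms(5) unfolding Tr_def by simp
qed

lemma big_pow: "b > 1 \<Longrightarrow> n \<ge> c \<Longrightarrow> c < (b::nat) ^ n"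
  using pow_gt[of b n] by linarith

lemma tot_ge1: "k > 0 \<Longrightarrow> totient k \<ge> 1"
  by (simp add: Suc_le_eq)

lemma Tr_inj_aux:
  assumes "b > 1" "proper p R I" "k = (GREATEST d. d dvd p \<and> coprime d (b::nat))"
    and "s < s'" "s' < p" "p div k dvd s" "p div k dvd s'" "Tr b p R s = Tr b p R s'"
  shows False
proof -
  have p1: "p \<ge> 1" using assms(2) unfolding proper_def by simp
  have kpos: "k > 0" using k_props(3)[OF p1 assms(3)] .
  define n where "n = totient k * p"
  have "p \<le> n" unfolding n_def using tot_ge1[OF kpos] by simp
  hence pn: "p < b ^ n" using big_pow[OF assms(1)] by simp
  have Z: "((s + z) mod p \<in> R) = ((s' + z) mod p \<in> R)" if zp0: "z < p" for z
  proof -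
    have "z < b ^ n" using pn zp0 by simp
    then obtain v where v: "v \<in> words b" "length v = n" "val b v = z"
      using exists_word[of b z n] assms(1) by auto
    have "v \<in> Tr b p R s \<longleftrightarrow> (s + z) mod p \<in> R"
      using Tr_per[OF p1 assms(3), of s v p R] assms(4,5,6) v n_def by simp
    moreover have "v \<in> Tr b p R s' \<longleftrightarrow> (s' + z) mod p \<in> R"
      using Tr_per[OF p1 assms(3), of s' v p R] assms(5,7) v n_def by simp
    ultimately show ?thesis using assms(8) by simp
  qed
  have "\<forall>t<p. (t \<in> R) = ((t + (s' - s)) mod p \<in> R)"
  proof (intro allI impI)
    fix t assume t: "t < p"
    define z where "z = (t + p - s) mod p"
    have zp: "z < p" unfolding z_def using p1 by simp
    have "(s + z) mod p = (s + (t + p - s)) mod p" unfolding z_def by (rule mod_add_right_eq)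
    also have "s + (t + p - s) = t + p" using assms(4,5) by simp
    finally have e1: "(s + z) mod p = t" using t by simp
    have "(s' + z) mod p = (s' + (t + p - s)) mod p" unfolding z_def by (rule mod_add_right_eq)
    also have "s' + (t + p - s) = (t + (s' - s)) + p" using assms(4,5) by simp
    finally have e2: "(s' + z) mod p = (t + (s' - s)) mod p" by simp
    show "(t \<in> R) = ((t + (s' - s)) mod p \<in> R)" using Z[OF zp] e1 e2 by simp
  qed
  moreover have "0 < s' - s" "s' - s < p" using assms(4,5) by simp_all
  ultimately show False using shift_not_proper[OF assms(2)] by blast
qed

lemma Tr_inj:
  assumes "b > 1" "proper p R I" "k = (GREATEST d. d dvd p \<and> coprime d (b::nat))"
  shows "inj_on (Tr b p R) {s. s < p \<and> p div k dvd s}"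
proof (rule inj_onI)
  fix s s' assume "s \<in> {s. s < p \<and> p div k dvd s}" "s' \<in> {s. s < p \<and> p div k dvd s}"
    "Tr b p R s = Tr b p R s'"
  thus "s = s'" using Tr_inj_aux[OF assms, of s s'] Tr_inj_aux[OF assms, of s' s]
    by (cases s s' rule: linorder_cases) auto
qed

lemma Res0_notin:
  assumes "b > 1" "proper p R I" "k = (GREATEST d. d dvd p \<and> coprime d (b::nat))" "I \<noteq> {}"
    and "s < p" "p div k dvd s"
  shows "Res b (Sset p R I) 0 \<noteq> Tr b p R s"
proof
  assume eq: "Res b (Sset p R I) 0 = Tr b p R s"
  have p1: "p \<ge> 1" and R: "R \<subseteq> {..<p}" and fin: "finite I"
    using assms(2) unfolding proper_def by simp_all
  have kpos: "k > 0" using k_props(3)[OF p1 assms(3)] .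
  have Z: "z \<in> Sset p R I \<longleftrightarrow> (s + z) mod p \<in> R" for z
  proof -
    define n where "n = totient k * (z + 1)"
    have "z + 1 \<le> n" unfolding n_def using mult_le_mono1[OF tot_ge1[OF kpos], of "z+1"] by simp
    hence "z < b ^ n" using big_pow[OF assms(1), of "z + 1" n] by simp
    then obtain v where v: "v \<in> words b" "length v = n" "val b v = z"
      using exists_word[of b z n] assms(1) by auto
    have "v \<in> Tr b p R s \<longleftrightarrow> (s + z) mod p \<in> R"
      using Tr_per[OF p1 assms(3) assms(5,6), of v "z + 1" R] v n_def by simp
    moreover have "v \<in> Res b (Sset p R I) 0 \<longleftrightarrow> z \<in> Sset p R I"
      using v unfolding Res_def by simp
    ultimately show ?thesis using eq by simp
  qed
  show False
  proof (cases "s = 0")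
    case True
    obtain x where x: "x \<in> I" using assms(4) by blast
    have "x \<in> Sset p R I \<longleftrightarrow> x mod p \<in> R" using Z[of x] True by simp
    thus False using S_iff[OF R, of x I] x by simp
  next
    case False
    have "\<forall>t<p. (t \<in> R) = ((t + s) mod p \<in> R)"
    proof (intro allI impI)
      fix t assume t: "t < p"
      define z where "z = t + p * (Max I + 1)"
      have a: "1 * (Max I + 1) \<le> p * (Max I + 1)" by (rule mult_le_mono1[OF p1])
      have b: "p * (Max I + 1) \<le> z" unfolding z_def by (rule le_add2)
      have "z > Max I" by (rule less_le_trans[OF _ le_trans[OF a b]]) simp
      hence zI: "z \<notin> I" using notin_I[OF fin] by blast
      have "z mod p = t" unfolding z_def by (subst mod_mult_self2) (simp add: t)
      moreover have "(s + z) mod p = (t + s) mod p"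
      proof -
        have "s + z = (t + s) + p * (Max I + 1)" unfolding z_def by simp
        thus ?thesis by (simp only: mod_mult_self2)
      qed
      ultimately show "(t \<in> R) = ((t + s) mod p \<in> R)"
        using Z[of z] S_iff[OF R, of z I] zI by simp
    qed
    moreover have "0 < s" using False by simp
    ultimately show False using shift_not_proper[OF assms(2)] assms(5) by blast
  qed
qed



lemma Res_iter:
  assumes "b > 0" "Res b S (x * b ^ n) = Res b S x"
  shows "Res b S (x * b ^ (n * j)) = Res b S x"
proof (induction j)
  case 0 thus ?case by simp
next
  case (Suc j)
  have "Res b S (x * b ^ n * b ^ (n * j)) = Res b S (x * b ^ (n * j))"
    by (rule Res_shift_eq[OF assms(1) assms(2)])
  moreover have "x * b ^ n * b ^ (n * j) = x * b ^ (n * Suc j)" by (simp add: power_add mult.assoc)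
  ultimately show ?case using Suc.IH by simp
qed

lemma Z_eq:
  assumes "b > 1" "proper p R I" "k = (GREATEST d. d dvd p \<and> coprime d (b::nat))"
  shows "{X. \<exists>x. X = Res b (Sset p R I) x \<and> (\<exists>n\<ge>1. Res b (Sset p R I) (x * b ^ n) = Res b (Sset p R I) x)}
         = insert (Res b (Sset p R I) 0) (Tr b p R ` {s. s < p \<and> p div k dvd s})"
    (is "?Z = insert ?R0 (?T ` ?P)")
proof -
  have p1: "p \<ge> 1" and R: "R \<subseteq> {..<p}" and fin: "finite I"
    using assms(2) unfolding proper_def by simp_all
  have kpos: "k > 0" using k_props(3)[OF p1 assms(3)] .
  have b0: "b > 0" "b \<ge> 1" using assms(1) by simp_all
  show ?thesis
  proof (rule equalityI; rule subsetI)
    fix X assume "X \<in> ?Z"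
    then obtain x n where xn: "X = Res b (Sset p R I) x" "n \<ge> 1" "Res b (Sset p R I) (x * b ^ n) = Res b (Sset p R I) x"
      by blast
    show "X \<in> insert ?R0 (?T ` ?P)"
    proof (cases "x = 0")
      case True thus ?thesis using xn by simp
    next
      case False
      define j where "j = Max I + p div k + 1"
      define N where "N = n * j"
      have jN: "j \<le> N" unfolding N_def using xn(2) by simp
      have "N < b ^ N" using pow_gt[OF assms(1)] .
      moreover have "b ^ N \<le> x * b ^ N" using False by simp
      ultimately have yM: "x * b ^ N > Max I" using jN unfolding j_def by linarith
      have "p div k \<le> N" using jN unfolding j_def by linarith
      hence qd: "p div k dvd b ^ N" using q_dvd_pow[OF p1 assms(3)] by blast
      have "p div k dvd p" using k_props(1)[OF p1 assms(3)] by (metis dvd_div_mult_self dvd_triv_left)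
      hence "p div k dvd (x * b ^ N) mod p" using qd by (simp add: dvd_mod)
      moreover have "(x * b ^ N) mod p < p" using p1 by simp
      ultimately have inP: "(x * b ^ N) mod p \<in> ?P" by simp
      have "X = Res b (Sset p R I) (x * b ^ N)" using Res_iter[OF b0(1) xn(3), of j] xn(1) N_def by simp
      also have "\<dots> = ?T ((x * b ^ N) mod p)" by (rule Res_big[OF R fin yM b0(2)])
      finally show ?thesis using inP by blast
    qed
  next
    fix X assume X: "X \<in> insert ?R0 (?T ` ?P)"
    show "X \<in> ?Z"
    proof (cases "X = ?R0")
      case True
      have "Res b (Sset p R I) (0 * b ^ 1) = Res b (Sset p R I) 0" by simp
      thus ?thesis using True by blast
    next
      case False
      then obtain s where s: "s < p" "p div k dvd s" "X = ?T s" using X by blast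
      define y where "y = s + p * (Max I + 1)"
      have a: "1 * (Max I + 1) \<le> p * (Max I + 1)" by (rule mult_le_mono1[OF p1])
      have bb: "p * (Max I + 1) \<le> y" unfolding y_def by (rule le_add2)
      have yM: "y > Max I" by (rule less_le_trans[OF _ le_trans[OF a bb]]) simp
      have ymod: "y mod p = s" unfolding y_def by (subst mod_mult_self2) (simp add: s)
      define n where "n = totient k"
      have n1: "n \<ge> 1" unfolding n_def using tot_ge1[OF kpos] .
      have "b ^ n \<ge> 1" using b0 by simp
      hence "y \<le> y * b ^ n" by simp
      hence yM2: "y * b ^ n > Max I" using yM by linarith
      have "(y * b ^ n) mod p = (s * b ^ n) mod p" using ymod by (metis mod_mult_left_eq)
      also have "\<dots> = s" using periodic[OF p1 assms(3) s(1,2), of 1] n_def by simp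
      finally have ybm: "(y * b ^ n) mod p = s" .
      have e1: "Res b (Sset p R I) y = ?T s" using Res_big[OF R fin yM b0(2)] ymod by simp
      have e2: "Res b (Sset p R I) (y * b ^ n) = ?T s" using Res_big[OF R fin yM2 b0(2)] ybm by simp
      show ?thesis using e1 e2 n1 s(3) by auto
    qed
  qed
qed

lemma card_Z:
  assumes "b > 1" "proper p R I" "k = (GREATEST d. d dvd p \<and> coprime d (b::nat))" "I \<noteq> {}"
  shows "card {X. \<exists>x. X = Res b (Sset p R I) x \<and> (\<exists>n\<ge>1. Res b (Sset p R I) (x * b ^ n) = Res b (Sset p R I) x)}
         = k + 1"
proof -
  have p1: "p \<ge> 1" using assms(2) unfolding proper_def by simp
  let ?P = "{s. s < p \<and> p div k dvd s}"
  have fP: "finite ?P" and cP: "card ?P = k" using card_P[OF p1 assms(3)] by simp_all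
  have "card (Tr b p R ` ?P) = k" using card_image[OF Tr_inj[OF assms(1,2,3)]] cP by simp
  moreover have "Res b (Sset p R I) 0 \<notin> Tr b p R ` ?P"
    using Res0_notin[OF assms(1,2,3,4)] by blast
  ultimately show ?thesis unfolding Z_eq[OF assms(1,2,3)] using fP by simp
qed



definition dC :: "nat \<Rightarrow> nat \<Rightarrow> nat set \<Rightarrow> nat \<times> nat option \<Rightarrow> nat \<Rightarrow> nat \<times> nat option" where
  "dC b p I = (\<lambda>(s, t) a. ((s * b + a) mod p, case t of None \<Rightarrow> None
                     | Some i \<Rightarrow> (if i * b + a \<le> Max I then Some (i * b + a) else None)))"

lemma autC_eq:
  "autC b p R I = \<lparr> states = {foldl (dC b p I) (0, Some 0) w | w. w \<in> words b}, init = (0, Some 0),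
     final = {(s, t). (s \<in> R) \<noteq> (t \<in> Some ` I)} \<inter> {foldl (dC b p I) (0, Some 0) w | w. w \<in> words b},
     trans = dC b p I \<rparr>"
  unfolding autC_def autA_def autB_def dC_def run_def Let_def by simp

definition tB :: "nat set \<Rightarrow> nat \<Rightarrow> nat option" where
  "tB I x = (if x \<le> Max I then Some x else None)"

lemma foldl_dC:
  assumes "b \<ge> 1"
  shows "foldl (dC b p I) (x mod p, tB I x) w = (vfrom b x w mod p, tB I (vfrom b x w))"
proof (induction w arbitrary: x)
  case Nil thus ?case by (simp add: vfrom_def)
next
  case (Cons a w)
  have "dC b p I (x mod p, tB I x) a = ((x * b + a) mod p, tB I (x * b + a))"
  proof -
    have "(x mod p * b + a) mod p = (x * b + a) mod p" by (metis mod_add_left_eq mod_mult_left_eq)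
    moreover have "x * 1 \<le> x * b" using assms by (rule mult_le_mono2)
    hence "x \<le> x * b + a" by linarith
    ultimately show ?thesis unfolding dC_def tB_def by auto
  qed
  moreover have "vfrom b x (a # w) = vfrom b (x * b + a) w" by (simp add: vfrom_def)
  ultimately show ?case using Cons.IH[of "x * b + a"] by simp
qed

lemma run_C:
  assumes "b \<ge> 1"
  shows "foldl (dC b p I) (0, Some 0) w = (val b w mod p, tB I (val b w))"
  using foldl_dC[OF assms, of p I 0 w] unfolding val_def tB_def by simp

lemma lang_C:
  assumes "b \<ge> 1" "R \<subseteq> {..<p}" "finite I"
  shows "lang b (autC b p R I) = {w \<in> words b. val b w \<in> Sset p R I}"
proof -
  have "w \<in> lang b (autC b p R I) \<longleftrightarrow> w \<in> words b \<and> val b w \<in> Sset p R I" for w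
  proof -
    have "run (autC b p R I) (init (autC b p R I)) w = (val b w mod p, tB I (val b w))"
      unfolding autC_eq run_def using run_C[OF assms(1)] by simp
    moreover have "tB I (val b w) \<in> Some ` I \<longleftrightarrow> val b w \<in> I"
      unfolding tB_def using notin_I[OF assms(3), of "val b w"] by auto
    moreover have "w \<in> words b \<Longrightarrow> foldl (dC b p I) (0, Some 0) w \<in> {foldl (dC b p I) (0, Some 0) w | w. w \<in> words b}"
      by blast
    ultimately show ?thesis unfolding lang_def using run_C[OF assms(1), of p I w]
      S_iff[OF assms(2), of "val b w" I] by (auto simp: run_def autC_eq)
  qed
  thus ?thesis by blast
qed



definition Lq :: "nat \<Rightarrow> 'q dfa \<Rightarrow> 'q \<Rightarrow> nat list set" where
  "Lq b M q = {v \<in> words b. run M q v \<in> final M}"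

lemma run_Cons: "run M q (a # w) = run M (trans M q a) w"
  by (simp add: run_def)

lemma run_Nil: "run M q [] = q"
  by (simp add: run_def)

lemma run_append: "run M q (u @ v) = run M (run M q u) v"
  by (simp add: run_def)

lemma run_in:
  assumes "complete_dfa b M" "q \<in> states M" "w \<in> words b"
  shows "run M q w \<in> states M"
  using assms(2,3)
proof (induction w arbitrary: q)
  case Nil thus ?case by (simp add: run_Nil)
next
  case (Cons a w)
  have "a < b" "w \<in> words b" using Cons.prems(2) by (auto simp: words_def)
  hence "trans M q a \<in> states M" using assms(1) Cons.prems(1) unfolding complete_dfa_def by blast
  thus ?case using Cons.IH \<open>w \<in> words b\<close> by (simp add: run_Cons)
qed

lemma funpow_run: "((\<lambda>s. trans M s 0) ^^ n) q = run M q (replicate n 0)"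
proof (induction n arbitrary: q)
  case 0 thus ?case by (simp add: run_Nil)
next
  case (Suc n)
  have "((\<lambda>s. trans M s 0) ^^ Suc n) q = ((\<lambda>s. trans M s 0) ^^ n) (trans M q 0)"
    by (simp add: funpow_Suc_right del: funpow.simps)
  thus ?case using Suc.IH by (simp add: run_Cons)
qed

lemma min_acc:
  assumes "is_minimisation b (M :: nat dfa) L" "q \<in> states M"
  shows "\<exists>u \<in> words b. run M (init M) u = q"
proof (rule ccontr)
  assume nacc: "\<not> ?thesis"
  have cM: "complete_dfa b M" and lM: "lang b M = L"
    and minM: "\<And>M' :: nat dfa. complete_dfa b M' \<Longrightarrow> lang b M' = L \<Longrightarrow> card (states M) \<le> card (states M')"
    using assms(1) unfolding is_minimisation_def by auto
  define Acc where "Acc = {run M (init M) u | u. u \<in> words b}"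
  have AccS: "Acc \<subseteq> states M" unfolding Acc_def using run_in[OF cM] cM unfolding complete_dfa_def by blast
  have fin: "finite (states M)" using cM unfolding complete_dfa_def by simp
  define M' where "M' = \<lparr> states = Acc, init = init M, final = final M \<inter> Acc, trans = trans M \<rparr>"
  have "[] \<in> words b" by (simp add: words_def)
  hence iA: "init M \<in> Acc" unfolding Acc_def by (force simp: run_Nil)
  have tA: "\<forall>q \<in> Acc. \<forall>a < b. trans M q a \<in> Acc"
  proof (intro ballI allI impI)
    fix q a assume "q \<in> Acc" "a < b"
    then obtain u where u: "u \<in> words b" "q = run M (init M) u" unfolding Acc_def by blast
    have "u @ [a] \<in> words b" using u(1) \<open>a < b\<close> by (simp add: words_def)
    moreover have "run M (init M) (u @ [a]) = trans M q a" using u(2) by (simp add: run_append run_Cons run_Nil)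
    ultimately have "\<exists>u'. trans M q a = run M (init M) u' \<and> u' \<in> words b" by metis
    thus "trans M q a \<in> Acc" unfolding Acc_def by simp
  qed
  have cM': "complete_dfa b M'" unfolding complete_dfa_def M'_def
    using finite_subset[OF AccS fin] iA tA by auto
  have "lang b M' = lang b M"
  proof -
    have "w \<in> words b \<Longrightarrow> run M (init M) w \<in> Acc" for w unfolding Acc_def by blast
    thus ?thesis unfolding lang_def M'_def run_def by auto
  qed
  hence "card (states M) \<le> card Acc" using minM[OF cM'] lM unfolding M'_def by simp
  moreover have "q \<notin> Acc" using nacc unfolding Acc_def by auto
  hence "Acc \<noteq> states M" using assms(2) by blast
  ultimately show False using AccS fin by (meson card_seteq)
qed

lemma min_inj:
  assumes "is_minimisation b (M :: nat dfa) L"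
  shows "inj_on (Lq b M) (states M)"
proof (rule inj_onI, rule ccontr)
  fix q1 q2 assume q1: "q1 \<in> states M" and q2: "q2 \<in> states M" and eqL: "Lq b M q1 = Lq b M q2"
    and ne: "q1 \<noteq> q2"
  have cM: "complete_dfa b M" and lM: "lang b M = L"
    and minM: "\<And>M' :: nat dfa. complete_dfa b M' \<Longrightarrow> lang b M' = L \<Longrightarrow> card (states M) \<le> card (states M')"
    using assms(1) unfolding is_minimisation_def by auto
  have fin: "finite (states M)" using cM unfolding complete_dfa_def by simp
  define g where "g r = (if r = q2 then q1 else r)" for r
  define M' where "M' = \<lparr> states = states M - {q2}, init = g (init M), final = final M - {q2},
                          trans = (\<lambda>q a. g (trans M q a)) \<rparr>"
  have gS: "r \<in> states M \<Longrightarrow> g r \<in> states M - {q2}" for r unfolding g_def using q1 ne by auto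
  have tS: "q \<in> states M \<Longrightarrow> a < b \<Longrightarrow> trans M q a \<in> states M" for q a
    using cM unfolding complete_dfa_def by blast
  have cM': "complete_dfa b M'" unfolding complete_dfa_def M'_def
    using fin cM gS tS unfolding complete_dfa_def by auto
  have gL: "r \<in> states M \<Longrightarrow> v \<in> words b \<Longrightarrow> (run M (g r) v \<in> final M) = (run M r v \<in> final M)" for r v
    using eqL unfolding g_def Lq_def by auto
  have key: "q \<in> states M - {q2} \<Longrightarrow> w \<in> words b \<Longrightarrow> (run M' q w \<in> final M') = (run M q w \<in> final M)" for q w
  proof (induction w arbitrary: q)
    case Nil thus ?case by (simp add: run_Nil M'_def)
  next
    case (Cons a w)
    have aw: "a < b" "w \<in> words b" using Cons.prems(2) by (auto simp: words_def)
    have tq: "trans M q a \<in> states M" using tS Cons.prems(1) aw(1) by blast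
    have "run M' q (a # w) = run M' (g (trans M q a)) w" by (simp add: run_Cons M'_def)
    moreover have "(run M' (g (trans M q a)) w \<in> final M') = (run M (g (trans M q a)) w \<in> final M)"
      using Cons.IH[OF gS[OF tq] aw(2)] .
    moreover have "(run M (g (trans M q a)) w \<in> final M) = (run M (trans M q a) w \<in> final M)"
      using gL[OF tq aw(2)] .
    ultimately show ?case by (simp add: run_Cons)
  qed
  have iS: "init M \<in> states M" using cM unfolding complete_dfa_def by simp
  have "lang b M' = lang b M"
  proof -
    have "w \<in> words b \<Longrightarrow> (run M' (init M') w \<in> final M') = (run M (init M) w \<in> final M)" for w
      using key[OF gS[OF iS]] gL[OF iS] unfolding M'_def by simp
    thus ?thesis unfolding lang_def by blast
  qed
  hence "card (states M) \<le> card (states M - {q2})" using minM[OF cM'] lM unfolding M'_def by simp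
  moreover have "card (states M - {q2}) < card (states M)" by (rule card_Diff1_less[OF fin q2])
  ultimately show False by simp
qed



theorem proposition41:
  fixes b p :: nat and R I :: "nat set" and M :: "nat dfa"
  assumes "b > 1"
    and "proper p R I"
    and "I \<noteq> {}"
    and "k = (GREATEST d. d dvd p \<and> coprime d b)"
    and "is_minimisation b M (lang b (autC b p R I))"
  shows "card {q. on_zero_circuit M q} = k + 1"
proof -
  have p1: "p \<ge> 1" and R: "R \<subseteq> {..<p}" and fin: "finite I"
    using assms(2) unfolding proper_def by simp_all
  have b1: "b \<ge> 1" "b > 0" using assms(1) by simp_all
  define S where "S = Sset p R I"
  have L: "lang b (autC b p R I) = {w \<in> words b. val b w \<in> S}"
    using lang_C[OF b1(1) R fin] S_def by simp
  have cM: "complete_dfa b M" and lM: "lang b M = {w \<in> words b. val b w \<in> S}"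
    using assms(5) L unfolding is_minimisation_def by auto
  have iS: "init M \<in> states M" using cM unfolding complete_dfa_def by simp
  have LqRes: "Lq b M (run M (init M) u) = Res b S (val b u)" if u: "u \<in> words b" for u
  proof -
    have "v \<in> Lq b M (run M (init M) u) \<longleftrightarrow> v \<in> Res b S (val b u)" for v
    proof -
      have "v \<in> Lq b M (run M (init M) u) \<longleftrightarrow> v \<in> words b \<and> u @ v \<in> lang b M"
        unfolding Lq_def lang_def using u by (auto simp: run_append)
      also have "\<dots> \<longleftrightarrow> v \<in> Res b S (val b u)"
        unfolding lM Res_def using u by (auto simp: val_append)
      finally show ?thesis .
    qed
    thus ?thesis by blast
  qed
  have inj: "inj_on (Lq b M) (states M)" using min_inj[OF assms(5)] .
  define C where "C = {q. on_zero_circuit M q}"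
  define Z where "Z = {X. \<exists>x. X = Res b S x \<and> (\<exists>n\<ge>1. Res b S (x * b ^ n) = Res b S x)}"
  have CS: "C \<subseteq> states M" unfolding C_def on_zero_circuit_def by blast
  have "Lq b M ` C = Z"
  proof (rule equalityI; rule subsetI)
    fix X assume "X \<in> Lq b M ` C"
    then obtain q where q: "q \<in> C" "X = Lq b M q" by blast
    then obtain n where n: "n \<ge> 1" "((\<lambda>s. trans M s 0) ^^ n) q = q" "q \<in> states M"
      unfolding C_def on_zero_circuit_def by blast
    obtain u where u: "u \<in> words b" "run M (init M) u = q" using min_acc[OF assms(5) n(3)] by blast
    have ur: "u @ replicate n 0 \<in> words b" using u(1) rep0_words[OF b1(2)] by simp
    have "run M (init M) (u @ replicate n 0) = q" using n(2) u(2) by (simp add: run_append funpow_run)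
    hence "Lq b M q = Res b S (val b u * b ^ n)"
      using LqRes[OF ur] by (simp add: val_append val_rep)
    moreover have "Lq b M q = Res b S (val b u)" using LqRes[OF u(1)] u(2) by simp
    ultimately show "X \<in> Z" unfolding Z_def using q(2) n(1) by auto
  next
    fix X assume "X \<in> Z"
    then obtain x n where xn: "X = Res b S x" "n \<ge> 1" "Res b S (x * b ^ n) = Res b S x"
      unfolding Z_def by blast
    obtain u where u: "u \<in> words b" "val b u = x" using exists_word_val[OF assms(1)] by blast
    define q where "q = run M (init M) u"
    have qS: "q \<in> states M" unfolding q_def by (rule run_in[OF cM iS u(1)])
    have ur: "u @ replicate n 0 \<in> words b" using u(1) rep0_words[OF b1(2)] by simp
    define q' where "q' = run M (init M) (u @ replicate n 0)"
    have q'S: "q' \<in> states M" unfolding q'_def by (rule run_in[OF cM iS ur])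
    have "Lq b M q' = Res b S (x * b ^ n)" unfolding q'_def
      using LqRes[OF ur] u(2) by (simp add: val_append val_rep)
    moreover have "Lq b M q = Res b S x" unfolding q_def using LqRes[OF u(1)] u(2) by simp
    ultimately have "q' = q" using inj qS q'S xn(3) by (simp add: inj_on_def)
    hence "((\<lambda>s. trans M s 0) ^^ n) q = q" unfolding q'_def q_def by (simp add: run_append funpow_run)
    hence "q \<in> C" unfolding C_def on_zero_circuit_def using qS xn(2) by blast
    thus "X \<in> Lq b M ` C" using \<open>Lq b M q = Res b S x\<close> xn(1) by blast
  qed
  hence "card C = card Z" using card_image[OF inj_on_subset[OF inj CS]] by simp
  also have "card Z = k + 1" unfolding Z_def S_def by (rule card_Z[OF assms(1,2,4,3)])
  finally show ?thesis unfolding C_def .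
qed


end
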